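(* Let $A_q$ be the set of polynomials $F\in\mathbb{Q}(q)[x]$ such that $F([n]_q)\in\mathbb{Z}[q,q^{-1}]$ for all integers $n\ge0$. For $k\ge0$ let $$B_k(x)=\frac{\prod_{j=1}^{k}\big([j]_q+q^jx\big)}{[k]!_q}.$$ Then the polynomials $B_k$, $k\ge0$, form a basis of $A_q$ as a module over $\mathbb{Z}[q,q^{-1}]$.
   Context: $q$ is an indeterminate; $[n]_q=(q^n-1)/(q-1)$ for $n\in\mathbb{Z}$ and $[k]!_q=[1]_q\cdots[k]_q$ (with $[0]!_q=1$). *)

theory Defs
  imports "HOL-Computational_Algebra.Polynomial" "HOL-Computational_Algebra.Fraction_Field"
begin

type_synonym qfun = "rat poly fract"

definition qvar :: qfun where
  "qvar = Fract [:0, 1:] 1"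

definition qint :: "int \<Rightarrow> qfun" where
  "qint n = (qvar powi n - 1) / (qvar - 1)"

definition qfact :: "nat \<Rightarrow> qfun" where
  "qfact k = (\<Prod>j=1..k. qint (int j))"

definition laurent :: "qfun set" where
  "laurent = {Fract (map_poly of_int p) 1 / qvar ^ m | (p :: int poly) m. True}"

definition Aq :: "qfun poly set" where
  "Aq = {F. \<forall>n::nat. poly F (qint (int n)) \<in> laurent}"

definition Bq :: "nat \<Rightarrow> qfun poly" where
  "Bq k = smult (inverse (qfact k))
            (\<Prod>j=1..k. [: qint (int j), qvar ^ j :])"

end

theory Submission
  imports Defs
begin

abbreviation Q where "Q \<equiv> qvar"

definition e :: "int poly \<Rightarrow> qfun" where "e p = Fract (map_poly of_int p) 1"

lemma mp_add: "map_poly (of_int :: int \<Rightarrow> rat) (p + q) = map_poly of_int p + map_poly of_int q"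
  by (rule poly_eqI) (simp add: coeff_map_poly)
lemma mp_uminus: "map_poly (of_int :: int \<Rightarrow> rat) (- p) = - map_poly of_int p"
  by (rule poly_eqI) (simp add: coeff_map_poly)
lemma mp_mult: "map_poly (of_int :: int \<Rightarrow> rat) (p * q) = map_poly of_int p * map_poly of_int q"
  by (rule poly_eqI) (simp add: coeff_map_poly coeff_mult)

lemma e_add: "e (p + q) = e p + e q" by (simp add: e_def mp_add)
lemma e_uminus: "e (- p) = - e p" by (simp add: e_def mp_uminus)
lemma e_mult: "e (p * q) = e p * e q" by (simp add: e_def mp_mult)
lemma e_1: "e 1 = 1" by (simp add: e_def One_fract_def)
lemma e_X: "e [:0,1:] = Q" by (simp add: e_def qvar_def map_poly_pCons)
lemma e_pow: "e (p ^ n) = e p ^ n" by (induction n) (simp_all add: e_1 e_mult)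

lemma Q_pow: "Q ^ n = Fract ([:0,1:] ^ n) 1"
  by (induction n) (simp_all add: qvar_def One_fract_def)

lemma Q_pow_ne1: "n > 0 \<Longrightarrow> Q ^ n \<noteq> 1"
proof
  assume "n > 0" "Q ^ n = 1"
  hence "([:0,1:] :: rat poly) ^ n = 1" by (simp add: Q_pow One_fract_def eq_fract)
  hence "degree (([:0,1:] :: rat poly) ^ n) = 0" by simp
  moreover have "degree (([:0,1:] :: rat poly) ^ n) = n" by (simp add: degree_power_eq)
  ultimately show False using \<open>n > 0\<close> by simp
qed

lemma Q_ne0: "Q \<noteq> 0" using Q_pow_ne1[of 1] by (auto simp: qvar_def Zero_fract_def eq_fract)
lemma Q_ne1: "Q \<noteq> 1" using Q_pow_ne1[of 1] by simp

lemma laurent_iff: "x \<in> laurent \<longleftrightarrow> (\<exists>p m. x = e p / Q ^ m)"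
  by (auto simp: laurent_def e_def)

lemma L_add: "x \<in> laurent \<Longrightarrow> y \<in> laurent \<Longrightarrow> x + y \<in> laurent"
proof -
  assume "x \<in> laurent" "y \<in> laurent"
  then obtain p m p' m' where x: "x = e p / Q^m" and y: "y = e p' / Q^m'" by (auto simp: laurent_iff)
  have "x + y = e (p * [:0,1:]^m' + p' * [:0,1:]^m) / Q^(m+m')"
    using Q_ne0 by (simp add: x y e_add e_mult e_pow e_X field_simps power_add)
  thus ?thesis by (auto simp: laurent_iff)
qed

lemma L_mult: "x \<in> laurent \<Longrightarrow> y \<in> laurent \<Longrightarrow> x * y \<in> laurent"
proof -
  assume "x \<in> laurent" "y \<in> laurent"
  then obtain p m p' m' where x: "x = e p / Q^m" and y: "y = e p' / Q^m'" by (auto simp: laurent_iff)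
  have "x * y = e (p * p') / Q^(m+m')"
    using Q_ne0 by (simp add: x y e_mult field_simps power_add)
  thus ?thesis by (auto simp: laurent_iff)
qed

lemma L_uminus: "x \<in> laurent \<Longrightarrow> - x \<in> laurent"
proof -
  assume "x \<in> laurent"
  then obtain p m where x: "x = e p / Q^m" by (auto simp: laurent_iff)
  have "- x = e (- p) / Q^m" by (simp add: x e_uminus)
  thus ?thesis by (auto simp: laurent_iff)
qed

lemma L_diff: "x \<in> laurent \<Longrightarrow> y \<in> laurent \<Longrightarrow> x - y \<in> laurent"
  using L_add[of x "- y"] L_uminus[of y] by simp

lemma L_divQ: "x \<in> laurent \<Longrightarrow> x / Q ^ k \<in> laurent"
proof -
  assume "x \<in> laurent"
  then obtain p m where x: "x = e p / Q^m" by (auto simp: laurent_iff)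
  have "x / Q^k = e p / Q^(m+k)" by (simp add: x power_add)
  thus ?thesis by (auto simp: laurent_iff)
qed

lemma L_1: "1 \<in> laurent" using laurent_iff[of 1] e_1 by force
lemma L_0: "0 \<in> laurent" using L_diff[OF L_1 L_1] by simp
lemma L_Qpow: "Q ^ k \<in> laurent"
proof -
  have "Q ^ k = e ([:0,1:] ^ k) / Q ^ 0" by (simp add: e_pow e_X)
  thus ?thesis unfolding laurent_iff by blast
qed

lemma qint_nat: "qint (int n) = (Q ^ n - 1) / (Q - 1)"
  by (simp add: qint_def)

lemma Qm1_ne0: "Q - 1 \<noteq> 0" using Q_ne1 by simp

lemma qint_add: "qint (int a) + Q ^ a * qint (int b) = qint (int (a + b))"
proof -
  have "qint (int a) + Q ^ a * qint (int b) = ((Q ^ a - 1) + Q ^ a * (Q ^ b - 1)) / (Q - 1)"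
    unfolding qint_nat by (simp add: add_divide_distrib)
  also have "(Q ^ a - 1) + Q ^ a * (Q ^ b - 1) = Q ^ (a + b) - 1" by (simp add: power_add algebra_simps)
  finally show ?thesis by (simp only: qint_nat)
qed

lemma qint_ne0: "n > 0 \<Longrightarrow> qint (int n) \<noteq> 0"
  using Q_pow_ne1[of n] Qm1_ne0 by (simp add: qint_nat)

lemma qint_0: "qint 0 = 0" by (simp add: qint_def)

lemma qfact_Suc: "qfact (Suc k) = qfact k * qint (int (Suc k))"
  by (simp add: qfact_def prod.cl_ivl_Suc)

lemma qfact_ne0: "qfact k \<noteq> 0"
proof (induction k)
  case (Suc k)
  have "qint (int (Suc k)) \<noteq> 0" by (rule qint_ne0) simp
  thus ?case using Suc by (simp only: qfact_Suc) simp
qed (simp add: qfact_def)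

lemma qfact_alt: "qfact d = (\<Prod>a<d. qint (int (Suc a)))"
  by (induction d) (simp_all add: qfact_Suc qfact_def)

lemma poly_Bq: "poly (Bq k) x = (\<Prod>j=1..k. qint (int j) + Q ^ j * x) / qfact k"
  by (simp add: Bq_def poly_prod field_simps)

definition V :: "nat \<Rightarrow> nat \<Rightarrow> qfun" where "V k n = poly (Bq k) (qint (int n))"

lemma V_alt: "V k n = (\<Prod>j=1..k. qint (int (n + j))) / qfact k"
proof -
  have "(\<Prod>j=1..k. qint (int j) + Q ^ j * qint (int n)) = (\<Prod>j=1..k. qint (int (n + j)))"
    by (rule prod.cong) (simp_all add: qint_add add.commute)
  thus ?thesis by (simp add: V_def poly_Bq)
qed

lemma V_0n: "V 0 n = 1" by (simp add: V_alt qfact_def)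
lemma V_k0: "V k 0 = 1" using qfact_ne0[of k] by (simp add: V_alt qfact_def)

lemma V_rec: "V (Suc k) (Suc n) = Q ^ (Suc k) * V (Suc k) n + V k (Suc n)"
proof -
  define g where "g = (\<lambda>j. qint (int j))"
  define P where "P = (\<Prod>j=1..k. g (Suc n + j))"
  have a: "(\<Prod>j=1..Suc k. g (Suc n + j)) = P * g (n + k + 2)"
    by (simp add: P_def prod.cl_ivl_Suc)
  have "(\<Prod>j=1..Suc k. g (n + j)) = g (n + 1) * (\<Prod>j=Suc 1..Suc k. g (n + j))"
    by (simp add: prod.atLeast_Suc_atMost)
  also have "(\<Prod>j=Suc 1..Suc k. g (n + j)) = P"
    unfolding P_def prod.shift_bounds_cl_Suc_ivl by simp
  finally have b: "(\<Prod>j=1..Suc k. g (n + j)) = g (n + 1) * P" .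
  have nk: "n + k + 2 = Suc k + (n + 1)" by simp
  have c: "g (n + k + 2) = Q ^ Suc k * g (n + 1) + g (Suc k)"
    unfolding g_def nk qint_add[symmetric] by simp
  have d: "g (Suc k) \<noteq> 0" unfolding g_def by (rule qint_ne0) simp
  show ?thesis
  proof -
    have VA: "V k' n' = (\<Prod>j=1..k'. g (n' + j)) / qfact k'" for k' n' by (simp add: V_alt g_def)
    have qs: "qfact (Suc k) = qfact k * g (Suc k)" by (simp add: qfact_Suc g_def)
    have e1: "V (Suc k) (Suc n) = P * g (n + k + 2) / (qfact k * g (Suc k))"
      unfolding VA a qs by simp
    have e2: "V (Suc k) n = g (n + 1) * P / (qfact k * g (Suc k))"
      unfolding VA b qs by simp
    have e3: "V k (Suc n) = P / qfact k" unfolding VA P_def by simp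
    show ?thesis unfolding e1 e2 e3 c using qfact_ne0[of k] d by (simp add: field_simps)
  qed
qed

lemma V_L: "V k n \<in> laurent"
proof (induction k arbitrary: n)
  case 0 thus ?case by (simp add: V_0n L_1)
next
  case (Suc k)
  note IHk = Suc.IH
  show ?case
  proof (induction n)
    case 0 thus ?case by (simp add: V_k0 L_1)
  next
    case (Suc n)
    thus ?case by (simp only: V_rec) (intro L_add L_mult L_Qpow IHk)
  qed
qed

lemma Bq_Aq: "Bq k \<in> Aq"
  using V_L by (simp add: Aq_def V_def)

definition lc :: "nat \<Rightarrow> qfun" where "lc k = inverse (qfact k) * (\<Prod>j=1..k. Q ^ j)"

lemma lc_ne0: "lc k \<noteq> 0" using qfact_ne0[of k] Q_ne0 by (simp add: lc_def)

lemma Bq_degree: "degree (Bq k) = k" and Bq_lead: "coeff (Bq k) k = lc k"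
proof -
  have nz: "\<forall>j\<in>{1..k}. [: qint (int j), Q ^ j :] \<noteq> 0" using Q_ne0 by simp
  have dp: "degree (\<Prod>j=1..k. [: qint (int j), Q ^ j :]) = k"
    using degree_prod_eq_sum_degree[OF nz] Q_ne0 by simp
  have lp: "lead_coeff (\<Prod>j=1..k. [: qint (int j), Q ^ j :]) = (\<Prod>j=1..k. Q ^ j)"
    unfolding lead_coeff_prod using Q_ne0 by simp
  show "degree (Bq k) = k" using qfact_ne0[of k] dp by (simp add: Bq_def)
  show "coeff (Bq k) k = lc k" using qfact_ne0[of k] dp lp by (simp add: Bq_def lc_def)
qed

lemma Bq_coeff_gt: "i > k \<Longrightarrow> coeff (Bq k) i = 0"
  using Bq_degree[of k] by (simp add: coeff_eq_0)

definition E :: "(nat \<Rightarrow> qfun) \<Rightarrow> nat \<Rightarrow> nat \<Rightarrow> qfun" where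
  "E \<alpha> d n = (\<Sum>i\<le>d. \<alpha> i * (Q ^ i) ^ n)"

definition etype :: "(nat \<Rightarrow> qfun) \<Rightarrow> nat \<Rightarrow> qfun \<Rightarrow> bool" where
  "etype s d t \<longleftrightarrow> (\<exists>\<alpha>. \<alpha> d = t \<and> s = E \<alpha> d)"

lemma et_zero: "etype (\<lambda>n. 0) d 0"
  unfolding etype_def by (rule exI[of _ "\<lambda>_. 0"]) (simp add: E_def fun_eq_iff)

lemma et_const: "etype (\<lambda>n. a) 0 a"
  unfolding etype_def by (rule exI[of _ "\<lambda>_. a"]) (simp add: E_def fun_eq_iff)

lemma et_const0: "d > 0 \<Longrightarrow> etype (\<lambda>n. a) d 0"
  unfolding etype_def
proof (rule exI[of _ "\<lambda>i. if i = 0 then a else 0"], intro conjI)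
  assume "d > 0" thus "(if d = 0 then a else 0) = 0" by simp
  show "(\<lambda>n. a) = E (\<lambda>i. if i = 0 then a else 0) d"
  proof -
    have "E (\<lambda>i. if i = 0 then a else 0) d n = (\<Sum>i\<le>d. if i = 0 then a else 0)" for n
      unfolding E_def by (rule sum.cong) auto
    thus ?thesis by (simp add: fun_eq_iff)
  qed
qed

lemma et_add: "etype s d t \<Longrightarrow> etype s' d t' \<Longrightarrow> etype (\<lambda>n. s n + s' n) d (t + t')"
  unfolding etype_def
proof (elim exE conjE)
  fix \<alpha> \<beta> assume "\<alpha> d = t" "s = E \<alpha> d" "\<beta> d = t'" "s' = E \<beta> d"
  thus "\<exists>\<gamma>. \<gamma> d = t + t' \<and> (\<lambda>n. s n + s' n) = E \<gamma> d"
    by (intro exI[of _ "\<lambda>i. \<alpha> i + \<beta> i"]) (simp add: E_def fun_eq_iff sum.distrib algebra_simps)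
qed

lemma et_mulq: "etype s d t \<Longrightarrow> etype (\<lambda>n. qint (int n) * s n) (Suc d) (t / (Q - 1))"
  unfolding etype_def
proof (elim exE conjE)
  fix \<alpha> assume a: "\<alpha> d = t" "s = E \<alpha> d"
  define \<beta> where "\<beta> i = ((if i = 0 then 0 else \<alpha> (i - 1)) - (if i \<le> d then \<alpha> i else 0)) / (Q - 1)" for i
  have "qint (int n) * s n = E \<beta> (Suc d) n" for n
  proof -
    have s1: "(\<Sum>i\<le>Suc d. (if i = 0 then 0 else \<alpha> (i - 1)) * (Q ^ i) ^ n) = (\<Sum>i\<le>d. \<alpha> i * (Q ^ Suc i) ^ n)"
      by (subst sum.atMost_Suc_shift) simp
    have s2: "(\<Sum>i\<le>Suc d. (if i \<le> d then \<alpha> i else 0) * (Q ^ i) ^ n) = (\<Sum>i\<le>d. \<alpha> i * (Q ^ i) ^ n)"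
      by (simp add: sum.atMost_Suc)
    have "E \<beta> (Suc d) n = ((\<Sum>i\<le>Suc d. (if i = 0 then 0 else \<alpha> (i - 1)) * (Q ^ i) ^ n)
         - (\<Sum>i\<le>Suc d. (if i \<le> d then \<alpha> i else 0) * (Q ^ i) ^ n)) / (Q - 1)"
    proof -
      have "E \<beta> (Suc d) n = (\<Sum>i\<le>Suc d. ((if i = 0 then 0 else \<alpha> (i - 1)) * (Q ^ i) ^ n
           - (if i \<le> d then \<alpha> i else 0) * (Q ^ i) ^ n) / (Q - 1))"
        unfolding E_def \<beta>_def by (rule sum.cong) (auto simp: field_simps Qm1_ne0)
      thus ?thesis by (simp only: sum_divide_distrib[symmetric] sum_subtractf)
    qed
    also have "\<dots> = ((\<Sum>i\<le>d. \<alpha> i * (Q ^ i) ^ n) * Q ^ n - (\<Sum>i\<le>d. \<alpha> i * (Q ^ i) ^ n)) / (Q - 1)"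
      unfolding s1 s2 by (simp add: sum_distrib_right sum_distrib_left power_mult_distrib algebra_simps)
    also have "\<dots> = qint (int n) * s n"
      unfolding qint_nat a E_def by (simp add: algebra_simps)
    finally show ?thesis by simp
  qed
  moreover have "\<beta> (Suc d) = t / (Q - 1)" by (simp add: \<beta>_def a)
  ultimately show "\<exists>\<gamma>. \<gamma> (Suc d) = t / (Q - 1) \<and> (\<lambda>n. qint (int n) * s n) = E \<gamma> (Suc d)"
    by (intro exI[of _ \<beta>]) (simp add: fun_eq_iff)
qed

lemma et_poly: "degree p \<le> d \<Longrightarrow> etype (\<lambda>n. poly p (qint (int n))) d (coeff p d / (Q - 1) ^ d)"
proof (induction p arbitrary: d rule: pCons_induct)
  case 0 thus ?case using et_zero by simp
next
  case (pCons a p)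
  show ?case
  proof (cases d)
    case 0
    with pCons have "p = 0" by (auto split: if_splits)
    thus ?thesis using et_const[of a] 0 by simp
  next
    case (Suc d')
    with pCons have dp: "degree p \<le> d'" by (cases "p = 0") auto
    have "etype (\<lambda>n. a + qint (int n) * poly p (qint (int n))) d (0 + coeff p d' / (Q - 1) ^ d' / (Q - 1))"
      unfolding Suc by (intro et_add et_const0 et_mulq pCons.IH dp) simp
    thus ?thesis using Suc by (simp add: field_simps)
  qed
qed

fun Dit :: "nat \<Rightarrow> (nat \<Rightarrow> qfun) \<Rightarrow> nat \<Rightarrow> qfun" where
  "Dit 0 s = s"
| "Dit (Suc k) s = (\<lambda>n. Dit k s (Suc n) - Q ^ k * Dit k s n)"

lemma Dit_L: "(\<And>n. s n \<in> laurent) \<Longrightarrow> Dit k s n \<in> laurent"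
  by (induction k arbitrary: n) (simp_all add: L_diff L_mult L_Qpow)

lemma Dit_E: "Dit k (E \<alpha> d) = E (\<lambda>i. \<alpha> i * (\<Prod>a<k. Q ^ i - Q ^ a)) d"
proof (induction k)
  case 0 thus ?case by simp
next
  case (Suc k)
  show ?case
    unfolding Dit.simps Suc.IH
    by (simp add: fun_eq_iff E_def sum_subtractf[symmetric] sum_distrib_left algebra_simps)
qed

lemma E_top: "E (\<lambda>i. \<alpha> i * (\<Prod>a<d. Q ^ i - Q ^ a)) d 0 = \<alpha> d * (\<Prod>a<d. Q ^ d - Q ^ a)"
proof -
  have "E (\<lambda>i. \<alpha> i * (\<Prod>a<d. Q ^ i - Q ^ a)) d 0 = (\<Sum>i<Suc d. \<alpha> i * (\<Prod>a<d. Q ^ i - Q ^ a))"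
    by (simp add: E_def lessThan_Suc_atMost)
  also have "\<dots> = (\<Sum>i<d. \<alpha> i * (\<Prod>a<d. Q ^ i - Q ^ a)) + \<alpha> d * (\<Prod>a<d. Q ^ d - Q ^ a)"
    by simp
  also have "(\<Sum>i<d. \<alpha> i * (\<Prod>a<d. Q ^ i - Q ^ a)) = 0"
    by (rule sum.neutral) (auto intro!: prod_zero)
  finally show ?thesis by simp
qed

lemma Pd: "\<exists>m. lc d * (\<Prod>a<d. Q ^ d - Q ^ a) / (Q - 1) ^ d = Q ^ m"
proof -
  have "(\<Prod>a<d. Q ^ d - Q ^ a) = (\<Prod>a<d. Q ^ d - Q ^ (d - Suc a))"
    by (rule prod.nat_diff_reindex[symmetric])
  also have "\<dots> = (\<Prod>a<d. Q ^ (d - Suc a) * ((Q - 1) * qint (int (Suc a))))"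
  proof (rule prod.cong)
    fix a assume "a \<in> {..<d}"
    hence "d = (d - Suc a) + Suc a" by simp
    hence "Q ^ d = Q ^ (d - Suc a) * Q ^ Suc a" by (metis power_add)
    moreover have qq: "(Q - 1) * qint (int (Suc a)) = Q ^ Suc a - 1"
      unfolding qint_nat using Qm1_ne0 by simp
    ultimately show "Q ^ d - Q ^ (d - Suc a) = Q ^ (d - Suc a) * ((Q - 1) * qint (int (Suc a)))"
      by (simp only: qq) (simp add: algebra_simps)
  qed simp
  also have "\<dots> = Q ^ (\<Sum>a<d. d - Suc a) * ((Q - 1) ^ d * qfact d)"
    by (simp add: prod.distrib power_sum qfact_alt)
  finally have 1: "(\<Prod>a<d. Q ^ d - Q ^ a) = Q ^ (\<Sum>a<d. d - Suc a) * ((Q - 1) ^ d * qfact d)" .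
  have 2: "(\<Prod>j=1..d. Q ^ j) = Q ^ (\<Sum>j=1..d. j)" by (simp add: power_sum)
  have "lc d * (\<Prod>a<d. Q ^ d - Q ^ a) / (Q - 1) ^ d = Q ^ ((\<Sum>j=1..d. j) + (\<Sum>a<d. d - Suc a))"
    unfolding lc_def 1 2 using qfact_ne0[of d] Qm1_ne0 by (simp add: field_simps power_add)
  thus ?thesis by blast
qed

lemma key: assumes "F \<in> Aq" "degree F \<le> d" shows "coeff F d / lc d \<in> laurent"
proof -
  obtain \<alpha> where a: "\<alpha> d = coeff F d / (Q - 1) ^ d" "(\<lambda>n. poly F (qint (int n))) = E \<alpha> d"
    using et_poly[OF assms(2)] unfolding etype_def by blast
  have "Dit d (\<lambda>n. poly F (qint (int n))) 0 \<in> laurent"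
    by (rule Dit_L) (use assms(1) in \<open>simp add: Aq_def\<close>)
  hence X: "coeff F d / (Q - 1) ^ d * (\<Prod>a<d. Q ^ d - Q ^ a) \<in> laurent"
    unfolding a Dit_E E_top a(1) .
  obtain m where m: "lc d * (\<Prod>a<d. Q ^ d - Q ^ a) / (Q - 1) ^ d = Q ^ m" using Pd by blast
  have Pnz: "(\<Prod>a<d. Q ^ d - Q ^ a) \<noteq> 0"
  proof
    assume "(\<Prod>a<d. Q ^ d - Q ^ a) = 0"
    hence "Q ^ m = 0" unfolding m[symmetric] by simp
    thus False using Q_ne0 by simp
  qed
  have "coeff F d / lc d = coeff F d / (Q - 1) ^ d * (\<Prod>a<d. Q ^ d - Q ^ a) / Q ^ m"
    unfolding m[symmetric] using lc_ne0[of d] Qm1_ne0 Q_ne0 Pnz by (simp add: field_simps)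
  thus ?thesis using L_divQ[OF X] by simp
qed

lemma Aq_sub: "F \<in> Aq \<Longrightarrow> c \<in> laurent \<Longrightarrow> F - smult c (Bq k) \<in> Aq"
  using Bq_Aq[of k] by (simp add: Aq_def L_diff L_mult)

lemma exist_aux:
  "\<forall>F\<in>Aq. (\<forall>i\<ge>d. coeff F i = 0) \<longrightarrow>
     (\<exists>c. (\<forall>k. c k \<in> laurent) \<and> F = (\<Sum>k<d. smult (c k) (Bq k)))"
proof (induction d)
  case 0
  show ?case
  proof (intro ballI impI)
    fix F :: "qfun poly" assume "\<forall>i\<ge>0. coeff F i = 0"
    hence "F = 0" by (simp add: poly_eq_iff)
    thus "\<exists>c. (\<forall>k. c k \<in> laurent) \<and> F = (\<Sum>k<0. smult (c k) (Bq k))"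
      using L_0 by auto
  qed
next
  case (Suc d)
  show ?case
  proof (intro ballI impI)
    fix F assume F: "F \<in> Aq" and z: "\<forall>i\<ge>Suc d. coeff F i = 0"
    have dg: "degree F \<le> d" using z by (intro degree_le) auto
    define cd where "cd = coeff F d / lc d"
    have cdL: "cd \<in> laurent" unfolding cd_def by (rule key[OF F dg])
    define F' where "F' = F - smult cd (Bq d)"
    have F'A: "F' \<in> Aq" unfolding F'_def by (rule Aq_sub[OF F cdL])
    have z': "\<forall>i\<ge>d. coeff F' i = 0"
    proof (intro allI impI)
      fix i assume "d \<le> i"
      show "coeff F' i = 0"
      proof (cases "i = d")
        case True thus ?thesis using lc_ne0[of d] by (simp add: F'_def cd_def Bq_lead)
      next
        case False thus ?thesis using \<open>d \<le> i\<close> z by (simp add: F'_def Bq_coeff_gt)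
      qed
    qed
    obtain c where c: "\<forall>k. c k \<in> laurent" "F' = (\<Sum>k<d. smult (c k) (Bq k))"
      using Suc.IH F'A z' by blast
    define c' where "c' = c(d := cd)"
    have "(\<Sum>k<Suc d. smult (c' k) (Bq k)) = (\<Sum>k<d. smult (c' k) (Bq k)) + smult cd (Bq d)"
      by (simp add: c'_def)
    also have "(\<Sum>k<d. smult (c' k) (Bq k)) = F'"
      unfolding c(2) c'_def by (rule sum.cong) auto
    finally have "F = (\<Sum>k<Suc d. smult (c' k) (Bq k))" by (simp add: F'_def)
    moreover have "\<forall>k. c' k \<in> laurent" using c(1) cdL by (simp add: c'_def)
    ultimately show "\<exists>c. (\<forall>k. c k \<in> laurent) \<and> F = (\<Sum>k<Suc d. smult (c k) (Bq k))" by blast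
  qed
qed

lemma indep: "(\<Sum>k<N. smult (a k) (Bq k)) = 0 \<Longrightarrow> \<forall>k<N. a k = 0"
proof (induction N)
  case 0 thus ?case by simp
next
  case (Suc N)
  have c0: "coeff (\<Sum>k<N. smult (a k) (Bq k)) N = 0"
    by (simp add: coeff_sum Bq_coeff_gt)
  have "coeff (\<Sum>k<Suc N. smult (a k) (Bq k)) N = 0" using Suc.prems by simp
  hence "a N * lc N = 0" using c0 by (simp add: Bq_lead)
  hence aN: "a N = 0" using lc_ne0[of N] by simp
  hence "(\<Sum>k<N. smult (a k) (Bq k)) = 0" using Suc.prems by simp
  hence "\<forall>k<N. a k = 0" by (rule Suc.IH)
  thus ?case using aN less_Suc_eq by auto
qed

lemma sum_extend: assumes "\<forall>k\<ge>N. c k = 0" "N \<le> M"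
  shows "(\<Sum>k<N. smult (c k) (Bq k)) = (\<Sum>k<M. smult (c k) (Bq k))"
  by (rule sum.mono_neutral_left) (use assms in auto)

theorem mainTheorem10:
  shows "(\<forall>k. Bq k \<in> Aq) \<and>
         (\<forall>F \<in> Aq. \<exists>!c :: nat \<Rightarrow> qfun.
             (\<forall>k. c k \<in> laurent) \<and>
             (\<exists>N. (\<forall>k\<ge>N. c k = 0) \<and> F = (\<Sum>k<N. smult (c k) (Bq k))))"
proof (intro conjI allI ballI)
  show "Bq k \<in> Aq" for k by (rule Bq_Aq)
  fix F assume F: "F \<in> Aq"
  show "\<exists>!c :: nat \<Rightarrow> qfun. (\<forall>k. c k \<in> laurent) \<and>
             (\<exists>N. (\<forall>k\<ge>N. c k = 0) \<and> F = (\<Sum>k<N. smult (c k) (Bq k)))"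
  proof (rule ex_ex1I)
    define N where "N = Suc (degree F)"
    have "\<forall>i\<ge>N. coeff F i = 0" unfolding N_def by (auto intro: coeff_eq_0)
    then obtain c where c: "\<forall>k. c k \<in> laurent" "F = (\<Sum>k<N. smult (c k) (Bq k))"
      using exist_aux F by blast
    define c' where "c' k = (if k < N then c k else 0)" for k
    have "F = (\<Sum>k<N. smult (c' k) (Bq k))" unfolding c(2) c'_def by (rule sum.cong) auto
    moreover have "\<forall>k\<ge>N. c' k = 0" by (simp add: c'_def)
    moreover have "\<forall>k. c' k \<in> laurent" using c(1) L_0 by (simp add: c'_def)
    ultimately show "\<exists>c. (\<forall>k. c k \<in> laurent) \<and> (\<exists>N. (\<forall>k\<ge>N. c k = 0) \<and> F = (\<Sum>k<N. smult (c k) (Bq k)))"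
      by blast
  next
    fix c1 c2 :: "nat \<Rightarrow> qfun"
    assume h1: "(\<forall>k. c1 k \<in> laurent) \<and> (\<exists>N. (\<forall>k\<ge>N. c1 k = 0) \<and> F = (\<Sum>k<N. smult (c1 k) (Bq k)))"
       and h2: "(\<forall>k. c2 k \<in> laurent) \<and> (\<exists>N. (\<forall>k\<ge>N. c2 k = 0) \<and> F = (\<Sum>k<N. smult (c2 k) (Bq k)))"
    obtain N1 where n1: "\<forall>k\<ge>N1. c1 k = 0" "F = (\<Sum>k<N1. smult (c1 k) (Bq k))" using h1 by blast
    obtain N2 where n2: "\<forall>k\<ge>N2. c2 k = 0" "F = (\<Sum>k<N2. smult (c2 k) (Bq k))" using h2 by blast
    define M where "M = N1 + N2"
    have e1: "F = (\<Sum>k<M. smult (c1 k) (Bq k))" using n1 sum_extend[OF n1(1), of M] by (simp add: M_def)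
    have e2: "F = (\<Sum>k<M. smult (c2 k) (Bq k))" using n2 sum_extend[OF n2(1), of M] by (simp add: M_def)
    have "(\<Sum>k<M. smult (c1 k - c2 k) (Bq k)) = 0"
      using e1 e2 by (simp add: smult_diff_left sum_subtractf)
    hence "\<forall>k<M. c1 k - c2 k = 0" by (rule indep)
    moreover have "\<forall>k\<ge>M. c1 k = 0 \<and> c2 k = 0" using n1(1) n2(1) by (simp add: M_def)
    ultimately show "c1 = c2" by (metis eq_iff_diff_eq_0 not_le ext)
  qed
qed

end
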